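(* Let $K$ be an $\mathbb N$-valued random variable with $\Pr(K=k)=k^{-5/4}/c$, and let $Y$ be a random variable coupled with $K$ taking the value "red" with conditional probability $2^{-K}$ and "blue" with conditional probability $1-2^{-K}$. Let $(K_i,Y_i)_{i\in\mathbb N}$ be i.i.d. copies of $(K,Y)$. Then almost every realization $(k_i,y_i)$ stabilizes, i.e. there is $i_0$ such that for all $i>i_0$: (1) the maximal value $k_m$ among $k_1,\ldots,k_i$ is a simple record; (2) $\max\{k_1,\ldots,k_i\}>i$; (3) $y_m=$ "blue" for the maximal record-time $m\le i$.
   Context: For a sequence $(k_i)$ of natural numbers, $i$ is a record-time if $k_i>k_j$ for all $j<i$, a non-strict record-time if $k_i\ge k_j$ for all $j<i$, and a record-time $i$ (or record $k_i$) is simple if $k_i<k_j$ for every non-strict record-time $j>i$. *)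

theory Defs
  imports "HOL-Probability.Probability"
begin

datatype colour = Red | Blue

text \<open>Sequences are indexed from 1; index 0 is ignored.\<close>

definition record_time :: "(nat \<Rightarrow> nat) \<Rightarrow> nat \<Rightarrow> bool" where
  "record_time k i \<longleftrightarrow> i \<ge> 1 \<and> (\<forall>j\<in>{1..<i}. k j < k i)"

definition nonstrict_record_time :: "(nat \<Rightarrow> nat) \<Rightarrow> nat \<Rightarrow> bool" where
  "nonstrict_record_time k i \<longleftrightarrow> i \<ge> 1 \<and> (\<forall>j\<in>{1..<i}. k j \<le> k i)"

definition simple_record_time :: "(nat \<Rightarrow> nat) \<Rightarrow> nat \<Rightarrow> bool" where
  "simple_record_time k i \<longleftrightarrow> record_time k i \<and>
     (\<forall>j>i. nonstrict_record_time k j \<longrightarrow> k i < k j)"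

definition norm_c :: real where
  "norm_c = (\<Sum>k. real (Suc k) powr (-5/4))"

text \<open>Joint law of (K,Y): P(K=k, Y=y) for k a natural number (K >= 1).\<close>
definition KY_prob :: "nat \<Rightarrow> colour \<Rightarrow> real" where
  "KY_prob k y = (if k = 0 then 0 else
     (real k powr (-5/4) / norm_c) *
       (case y of Red \<Rightarrow> (1/2) ^ k | Blue \<Rightarrow> 1 - (1/2) ^ k))"

definition max_record_time :: "(nat \<Rightarrow> nat) \<Rightarrow> nat \<Rightarrow> nat" where
  "max_record_time k i = (GREATEST m. m \<le> i \<and> record_time k m)"

end

theory Submission
  imports Defs
begin


lemma UNIV_colour: "(UNIV :: colour set) = {Red, Blue}"
  using colour.exhaust by auto

lemma summable_c: "summable (\<lambda>k. real (Suc k) powr (-5/4))"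
  using summable_real_powr_iff[of "-5/4"] summable_Suc_iff[of "\<lambda>n. real n powr (-5/4)"] by simp

lemma c_ge1: "norm_c \<ge> 1"
proof -
  have "(\<Sum>k\<in>{0}. real (Suc k) powr (-5/4)) \<le> (\<Sum>k. real (Suc k) powr (-5/4))"
    by (rule sum_le_suminf[OF summable_c]) auto
  then show ?thesis unfolding norm_c_def by simp
qed

definition pK :: "nat \<Rightarrow> real" where "pK v = KY_prob v Red + KY_prob v Blue"

lemma pK_eq: "pK v = (if v = 0 then 0 else real v powr (-5/4) / norm_c)"
  using c_ge1 unfolding pK_def KY_prob_def by (simp add: field_simps)

lemma pK_nonneg: "pK v \<ge> 0" using c_ge1 by (simp add: pK_eq)

lemma pK_le1: "pK v \<le> 1"
proof (cases "v = 0")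
  case False
  have "real v powr (-5/4) \<le> 1" using False by (simp add: powr_le_one_le powr_minus_divide ge_one_powr_ge_zero)
  then show ?thesis using False c_ge1 by (simp add: pK_eq divide_le_eq)
qed (simp add: pK_eq)

lemma pK_mono: "1 \<le> u \<Longrightarrow> u \<le> v \<Longrightarrow> pK v \<le> pK u"
  using c_ge1 by (auto simp: pK_eq divide_right_mono powr_mono2')

lemma pK_sums: "pK sums 1"
proof -
  have "(\<lambda>k. real (Suc k) powr (-5/4) / norm_c) sums (norm_c / norm_c)"
    unfolding norm_c_def by (intro sums_divide summable_sums summable_c)
  then have "(\<lambda>k. pK (Suc k)) sums 1" using c_ge1 by (simp add: pK_eq)
  then show ?thesis using sums_Suc_iff[of pK 1] by (simp add: pK_eq)
qed

lemma KY_Red_le: "KY_prob v Red \<le> (1/2)^v"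
proof -
  have "KY_prob v Red = pK v * (1/2)^v"
    unfolding KY_prob_def pK_eq by simp
  also have "\<dots> \<le> (1/2)^v" using pK_le1[of v] by (simp add: mult_left_le_one_le)
  finally show ?thesis .
qed

lemma KY_nonneg: "KY_prob v y \<ge> 0"
  using c_ge1 unfolding KY_prob_def by (cases y) (auto simp: power_le_one)




locale KYs = prob_space M for M :: "'a measure" +
  fixes K :: "nat \<Rightarrow> 'a \<Rightarrow> nat" and Y :: "nat \<Rightarrow> 'a \<Rightarrow> colour"
  assumes meas: "\<And>i. i \<ge> 1 \<Longrightarrow> (\<lambda>\<omega>. (K i \<omega>, Y i \<omega>)) \<in> measurable M (count_space UNIV)"
    and indep: "indep_vars (\<lambda>_. count_space UNIV) (\<lambda>i \<omega>. (K i \<omega>, Y i \<omega>)) {1..}"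
    and law: "\<And>i k y. i \<ge> 1 \<Longrightarrow>
      measure M {\<omega> \<in> space M. K i \<omega> = k \<and> Y i \<omega> = y} = KY_prob k y"
begin

lemma setsP: "i \<ge> 1 \<Longrightarrow> {\<omega> \<in> space M. P (K i \<omega>) (Y i \<omega>)} \<in> events"
proof -
  assume i: "i \<ge> 1"
  have "(\<lambda>\<omega>. (K i \<omega>, Y i \<omega>)) -` {(a,b). P a b} \<inter> space M \<in> sets M"
    by (rule measurable_sets[OF meas[OF i]]) auto
  moreover have "{\<omega> \<in> space M. P (K i \<omega>) (Y i \<omega>)} = (\<lambda>\<omega>. (K i \<omega>, Y i \<omega>)) -` {(a,b). P a b} \<inter> space M"
    by auto
  ultimately show ?thesis by simp
qed

lemma prob_fin:
  assumes i: "i \<ge> 1" and S: "finite S"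
  shows "prob {\<omega> \<in> space M. (K i \<omega>, Y i \<omega>) \<in> S} = (\<Sum>x\<in>S. KY_prob (fst x) (snd x))"
proof -
  let ?X = "\<lambda>\<omega>. (K i \<omega>, Y i \<omega>)"
  let ?N = "distr M (count_space UNIV) ?X"
  interpret N: prob_space ?N by (rule prob_space_distr[OF meas[OF i]])
  have "prob {\<omega> \<in> space M. ?X \<omega> \<in> S} = measure ?N S"
    by (subst measure_distr[OF meas[OF i]]) (auto intro: arg_cong[where f="prob"])
  also have "\<dots> = (\<Sum>x\<in>S. measure ?N {x})"
    by (rule N.finite_measure_eq_sum_singleton[OF S]) auto
  also have "\<dots> = (\<Sum>x\<in>S. KY_prob (fst x) (snd x))"
  proof (rule sum.cong[OF refl])
    fix x assume "x \<in> S"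
    have "measure ?N {x} = prob (?X -` {x} \<inter> space M)"
      by (subst measure_distr[OF meas[OF i]]) auto
    also have "?X -` {x} \<inter> space M = {\<omega> \<in> space M. K i \<omega> = fst x \<and> Y i \<omega> = snd x}"
      by (cases x) auto
    finally show "measure ?N {x} = KY_prob (fst x) (snd x)" using law[OF i] by simp
  qed
  finally show ?thesis .
qed

lemma probK:
  assumes i: "i \<ge> 1" and V: "finite V"
  shows "prob {\<omega> \<in> space M. K i \<omega> \<in> V} = (\<Sum>v\<in>V. pK v)"
proof -
  have "{\<omega> \<in> space M. K i \<omega> \<in> V} = {\<omega> \<in> space M. (K i \<omega>, Y i \<omega>) \<in> V \<times> UNIV}" by auto
  also have "prob \<dots> = (\<Sum>x\<in>V \<times> UNIV. KY_prob (fst x) (snd x))"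
    by (rule prob_fin[OF i]) (simp add: V UNIV_colour)
  also have "\<dots> = (\<Sum>v\<in>V. \<Sum>y\<in>UNIV. KY_prob v y)"
    by (subst sum.cartesian_product) (simp add: case_prod_beta)
  also have "\<dots> = (\<Sum>v\<in>V. pK v)"
    by (simp add: UNIV_colour pK_def)
  finally show ?thesis .
qed

end



lemma powr_calc: "(i::nat) \<ge> 1 \<Longrightarrow> real i * (real (i^2) * (2 * real (i^2)) powr (-5/4)) = 2 powr (-5/4) * sqrt (real i)"
proof -
  assume "i \<ge> 1"
  then have p: "real i > 0" by simp
  have "(2 * real (i^2)) powr (-5/4) = 2 powr (-5/4) * (real i powr 2) powr (-5/4)"
    using p by (simp add: powr_mult)
  also have "(real i powr 2) powr (-5/4) = real i powr (-5/2)" using powr_powr[of "real i" 2 "-5/4"] by simp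
  finally have "real i * (real (i^2) * (2 * real (i^2)) powr (-5/4)) = 2 powr (-5/4) * (real i powr 1 * real i powr 2 * real i powr (-5/2))"
    using p by (simp add: powr_realpow)
  also have "real i powr 1 * real i powr 2 * real i powr (-5/2) = real i powr (1 + 2 + (-5/2))"
    by (simp only: powr_add)
  also have "\<dots> = real i powr (1/2)" by simp
  also have "\<dots> = sqrt (real i)" using p by (simp add: powr_half_sqrt)
  finally show ?thesis .
qed

lemma expb: "(y::real) > 0 \<Longrightarrow> exp (-y) \<le> 256 / y^4"
proof -
  assume y: "y > 0"
  have "(1 + y / 4)^4 \<le> exp y" using exp_ge_one_plus_x_over_n_power_n[of 4 y] y by simp
  moreover have "(y/4)^4 \<le> (1 + y/4)^4" using y by (intro power_mono) auto
  ultimately have "y^4/256 \<le> exp y" by (simp add: power_divide)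
  then show ?thesis
    using y by (auto simp: exp_minus field_simps)
qed

context KYs begin

lemma F_bound:
  assumes V: "V \<ge> 1"
  shows "(\<Sum>v\<le>V. pK v) \<le> 1 - real V * ((2 * real V) powr (-5/4) / norm_c)"
proof -
  have "(\<Sum>v\<le>2*V. pK v) = prob {\<omega> \<in> space M. K 1 \<omega> \<in> {..2*V}}"
    by (rule probK[symmetric]) auto
  also have "\<dots> \<le> 1" by (rule prob_le_1)
  finally have tot: "(\<Sum>v\<le>2*V. pK v) \<le> 1" .
  have "{..2*V} = {..V} \<union> {V<..2*V}" by auto
  then have split: "(\<Sum>v\<le>2*V. pK v) = (\<Sum>v\<le>V. pK v) + (\<Sum>v\<in>{V<..2*V}. pK v)"
    by (simp add: sum.union_disjoint ivl_disj_int)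
  have "real (card {V<..2*V}) * ((2 * real V) powr (-5/4) / norm_c) \<le> (\<Sum>v\<in>{V<..2*V}. pK v)"
  proof (rule sum_bounded_below)
    fix v assume v: "v \<in> {V<..2*V}"
    then have "real v powr (-5/4) \<ge> (2 * real V) powr (-5/4)"
      by (intro powr_mono2') auto
    then show "(2 * real V) powr (-5/4) / norm_c \<le> pK v"
      using v c_ge1 by (auto simp: pK_eq divide_right_mono)
  qed
  then show ?thesis using tot split by simp
qed

definition Aev :: "nat \<Rightarrow> 'a set" where
  "Aev i = {\<omega> \<in> space M. \<forall>l\<in>{1..i}. K l \<omega> \<le> i^2}"

lemma Aev_sets: "Aev i \<in> events"
  unfolding Aev_def by (intro sets.sets_Collect_finite_All setsP) auto

lemma prob_Aev: assumes i: "i \<ge> 1" shows "prob (Aev i) = (\<Sum>v\<le>i^2. pK v) ^ i"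
proof -
  let ?X = "\<lambda>i \<omega>. (K i \<omega>, Y i \<omega>)"
  have "prob (\<Inter>l\<in>{1..i}. ?X l -` {x. fst x \<le> i^2} \<inter> space M) = (\<Prod>l\<in>{1..i}. prob (?X l -` {x. fst x \<le> i^2} \<inter> space M))"
    by (rule indep_varsD[OF indep]) (use i in auto)
  moreover have "(\<Inter>l\<in>{1..i}. ?X l -` {x. fst x \<le> i^2} \<inter> space M) = Aev i"
    using i unfolding Aev_def by auto
  moreover have "prob (?X l -` {x. fst x \<le> i^2} \<inter> space M) = (\<Sum>v\<le>i^2. pK v)" if "l \<in> {1..i}" for l
  proof -
    have "?X l -` {x. fst x \<le> i^2} \<inter> space M = {\<omega> \<in> space M. K l \<omega> \<in> {..i^2}}" by auto
    then show ?thesis using probK[of l "{..i^2}"] that by simp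
  qed
  ultimately show ?thesis by simp
qed

lemma prob_Aev_le: assumes i: "i \<ge> 1"
  shows "prob (Aev i) \<le> 256 / (2 powr (-5/4) / norm_c)^4 * inverse (real i ^ 2)"
proof -
  let ?x = "real (i^2) * ((2 * real (i^2)) powr (-5/4) / norm_c)"
  have "(\<Sum>v\<le>i^2. pK v) \<le> 1 - ?x" using F_bound[of "i^2"] i by simp
  also have "\<dots> \<le> exp (- ?x)" using exp_ge_add_one_self[of "- ?x"] by simp
  finally have F: "(\<Sum>v\<le>i^2. pK v) \<le> exp (- ?x)" .
  have "prob (Aev i) \<le> exp (- ?x) ^ i"
    unfolding prob_Aev[OF i] by (intro power_mono F sum_nonneg pK_nonneg)
  also have "\<dots> = exp (- (real i * ?x))" by (simp add: exp_of_nat_mult[symmetric])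
  also have "real i * ?x = 2 powr (-5/4) / norm_c * sqrt (real i)"
    using powr_calc[OF i] by (simp add: field_simps)
  also have "exp (- (2 powr (-5/4) / norm_c * sqrt (real i))) \<le> 256 / (2 powr (-5/4) / norm_c * sqrt (real i))^4"
    using i c_ge1 by (intro expb) auto
  also have "\<dots> = 256 / (2 powr (-5/4) / norm_c)^4 * inverse (real i ^ 2)"
  proof -
    have "sqrt (real i)^4 = (sqrt (real i)^2)^2" by (simp only: power_mult[symmetric]) simp
    then have "sqrt (real i)^4 = real i ^ 2" by simp
    then show ?thesis by (simp add: power_mult_distrib field_simps)
  qed
  finally show ?thesis .
qed

lemma AE_A: "AE \<omega> in M. eventually (\<lambda>n. \<omega> \<in> space M - Aev n) sequentially"
proof (rule borel_cantelli_AE1)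
  show "\<And>n. Aev n \<in> events" by (rule Aev_sets)
  show "\<And>n. emeasure M (Aev n) < \<infinity>" by (simp add: less_top[symmetric])
  show "summable (\<lambda>n. prob (Aev n))"
  proof (rule summable_comparison_test')
    show "summable (\<lambda>n. 256 / (2 powr (-5/4) / norm_c)^4 * inverse (real n ^ 2))"
      by (intro summable_mult inverse_power_summable) auto
    show "norm (prob (Aev n)) \<le> 256 / (2 powr (-5/4) / norm_c)^4 * inverse (real n ^ 2)" if "n \<ge> 1" for n
      using prob_Aev_le[OF that] by simp
  qed
qed

end



context KYs begin

definition Rev :: "nat \<Rightarrow> 'a set" where
  "Rev n = {\<omega> \<in> space M. K (Suc n) \<omega> \<ge> Suc n \<and> Y (Suc n) \<omega> = Red}"

lemma Rev_sets: "Rev n \<in> events"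
  unfolding Rev_def by (intro setsP) auto

lemma prob_Rev_le: "prob (Rev n) \<le> 4 * (2/3)^(Suc n)"
proof -
  define S where "S v = {\<omega> \<in> space M. K (Suc n) \<omega> = v \<and> Y (Suc n) \<omega> = Red \<and> Suc n \<le> v}" for v
  define g where "g v = (2/3::real)^(Suc n) * (3/4)^v" for v
  have Sset: "S v \<in> events" for v unfolding S_def by (intro setsP) auto
  have pS: "prob (S v) \<le> g v" for v
  proof (cases "Suc n \<le> v")
    case True
    have "prob (S v) = KY_prob v Red" unfolding S_def using True law[of "Suc n" v Red] by simp
    also have "\<dots> \<le> (1/2)^v" by (rule KY_Red_le)
    also have "(1/2::real)^v = (2/3)^v * (3/4)^v" by (simp add: power_mult_distrib[symmetric])
    also have "\<dots> \<le> g v" unfolding g_def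
      by (intro mult_right_mono power_decreasing True) auto
    finally show ?thesis .
  next
    case False
    then have "S v = {}" unfolding S_def by auto
    then show ?thesis by (simp add: g_def)
  qed
  have gs: "g sums ((2/3)^(Suc n) * (1 / (1 - 3/4)))"
    unfolding g_def by (intro sums_mult geometric_sums) auto
  have sumS: "summable (\<lambda>v. prob (S v))"
    by (rule summable_comparison_test'[OF sums_summable[OF gs]]) (use pS in auto)
  have "Rev n = (\<Union>v. S v)" unfolding Rev_def S_def by auto
  then have "prob (Rev n) \<le> (\<Sum>v. prob (S v))"
    using finite_measure_subadditive_countably[of S] Sset sumS by auto
  also have "\<dots> \<le> (\<Sum>v. g v)"
    by (rule suminf_le[OF pS sumS sums_summable[OF gs]])
  also have "\<dots> = 4 * (2/3)^(Suc n)" using sums_unique[OF gs] by simp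
  finally show ?thesis .
qed

lemma AE_R: "AE \<omega> in M. eventually (\<lambda>n. \<omega> \<in> space M - Rev n) sequentially"
proof (rule borel_cantelli_AE1)
  show "\<And>n. Rev n \<in> events" by (rule Rev_sets)
  show "\<And>n. emeasure M (Rev n) < \<infinity>" by (simp add: less_top[symmetric])
  show "summable (\<lambda>n. prob (Rev n))"
  proof (rule summable_comparison_test')
    show "summable (\<lambda>n. 4 * (2/3::real)^(Suc n))"
      by (intro summable_mult) (simp add: summable_geometric)
    show "norm (prob (Rev n)) \<le> 4 * (2/3)^(Suc n)" for n
      using prob_Rev_le[of n] by simp
  qed
qed

definition Dev :: "nat \<Rightarrow> 'a set" where
  "Dev n = {\<omega> \<in> space M. \<exists>l\<in>{1..n}. K l \<omega> = K (Suc n) \<omega> \<and> K (Suc n) \<omega> > n^2}"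

lemma pair_sets: "l \<ge> 1 \<Longrightarrow> {\<omega> \<in> space M. K l \<omega> = K (Suc n) \<omega> \<and> K (Suc n) \<omega> > n^2} \<in> events"
proof -
  assume l: "l \<ge> 1"
  have "{\<omega> \<in> space M. \<exists>v::nat. K l \<omega> = v \<and> (K (Suc n) \<omega> = v \<and> v > n^2)} \<in> events"
    by (intro sets.sets_Collect_countable_Ex sets.sets_Collect_conj setsP l) auto
  moreover have "{\<omega> \<in> space M. \<exists>v::nat. K l \<omega> = v \<and> (K (Suc n) \<omega> = v \<and> v > n^2)} =
     {\<omega> \<in> space M. K l \<omega> = K (Suc n) \<omega> \<and> K (Suc n) \<omega> > n^2}" by auto
  ultimately show ?thesis by simp
qed

lemma Dev_sets: "Dev n \<in> events"
  unfolding Dev_def by (intro sets.sets_Collect_finite_Ex pair_sets) auto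

lemma prob_pair:
  assumes l: "l \<in> {1..n}"
  shows "prob {\<omega> \<in> space M. K l \<omega> = K (Suc n) \<omega> \<and> K (Suc n) \<omega> > n^2} \<le> pK (n^2 + 1)"
proof -
  let ?X = "\<lambda>i \<omega>. (K i \<omega>, Y i \<omega>)"
  define W where "W v i = (if i = l then {v} else {u. u = v \<and> v > n^2})" for v i
  define B where "B v = {\<omega> \<in> space M. K l \<omega> = v \<and> K (Suc n) \<omega> = v \<and> v > n^2}" for v
  define g where "g v = pK (n^2 + 1) * pK v" for v
  have lne: "l \<noteq> Suc n" "l \<ge> 1" using l by auto
  have Bset: "B v \<in> events" for v
    unfolding B_def by (intro sets.sets_Collect_conj setsP lne) auto
  have pB: "prob (B v) \<le> g v" for v
  proof -
    have "prob (\<Inter>i\<in>{l, Suc n}. ?X i -` {x. fst x \<in> W v i} \<inter> space M) = (\<Prod>i\<in>{l, Suc n}. prob (?X i -` {x. fst x \<in> W v i} \<inter> space M))"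
      by (rule indep_varsD[OF indep]) (use lne in auto)
    moreover have "(\<Inter>i\<in>{l, Suc n}. ?X i -` {x. fst x \<in> W v i} \<inter> space M) = B v"
      unfolding B_def W_def using lne by auto
    moreover have "prob (?X i -` {x. fst x \<in> W v i} \<inter> space M) = (\<Sum>u\<in>W v i. pK u)" if "i \<ge> 1" for i
    proof -
      have "?X i -` {x. fst x \<in> W v i} \<inter> space M = {\<omega> \<in> space M. K i \<omega> \<in> W v i}" by auto
      then show ?thesis using probK[OF that, of "W v i"] by (simp add: W_def)
    qed
    ultimately have "prob (B v) = (\<Sum>u\<in>W v l. pK u) * (\<Sum>u\<in>W v (Suc n). pK u)"
      using lne by simp
    also have "\<dots> = pK v * (if v > n^2 then pK v else 0)"
      using lne by (simp add: W_def)
    also have "\<dots> \<le> g v"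
      unfolding g_def using pK_mono[of "n^2+1" v] pK_nonneg[of v] pK_nonneg[of "n^2+1"]
      by (auto simp: mult.commute intro: mult_left_mono)
    finally show ?thesis .
  qed
  have gs: "g sums (pK (n^2+1) * 1)"
    unfolding g_def by (intro sums_mult pK_sums)
  have sumB: "summable (\<lambda>v. prob (B v))"
    by (rule summable_comparison_test'[OF sums_summable[OF gs]]) (use pB in auto)
  have "{\<omega> \<in> space M. K l \<omega> = K (Suc n) \<omega> \<and> K (Suc n) \<omega> > n^2} = (\<Union>v. B v)"
    unfolding B_def by auto
  then have "prob {\<omega> \<in> space M. K l \<omega> = K (Suc n) \<omega> \<and> K (Suc n) \<omega> > n^2} \<le> (\<Sum>v. prob (B v))"
    using finite_measure_subadditive_countably[of B] Bset sumB by auto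
  also have "\<dots> \<le> (\<Sum>v. g v)"
    by (rule suminf_le[OF pB sumB sums_summable[OF gs]])
  also have "\<dots> = pK (n^2 + 1)" using sums_unique[OF gs] by simp
  finally show ?thesis .
qed

lemma prob_Dev_le: assumes n: "n \<ge> 1" shows "prob (Dev n) \<le> real n powr (-3/2)"
proof -
  have "Dev n = (\<Union>l\<in>{1..n}. {\<omega> \<in> space M. K l \<omega> = K (Suc n) \<omega> \<and> K (Suc n) \<omega> > n^2})"
    unfolding Dev_def by auto
  moreover have sub: "(\<lambda>l. {\<omega> \<in> space M. K l \<omega> = K (Suc n) \<omega> \<and> K (Suc n) \<omega> > n^2}) ` {1..n} \<subseteq> events"
    using pair_sets by auto
  moreover have "prob (\<Union>l\<in>{1..n}. {\<omega> \<in> space M. K l \<omega> = K (Suc n) \<omega> \<and> K (Suc n) \<omega> > n^2})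
     \<le> (\<Sum>l\<in>{1..n}. prob {\<omega> \<in> space M. K l \<omega> = K (Suc n) \<omega> \<and> K (Suc n) \<omega> > n^2})"
    by (rule finite_measure_subadditive_finite[OF _ sub]) simp
  ultimately have "prob (Dev n) \<le> (\<Sum>l\<in>{1..n}. prob {\<omega> \<in> space M. K l \<omega> = K (Suc n) \<omega> \<and> K (Suc n) \<omega> > n^2})"
    by simp
  also have "\<dots> \<le> (\<Sum>l\<in>{1..n}. pK (n^2 + 1))"
    by (intro sum_mono prob_pair)
  also have "\<dots> = real n * pK (n^2 + 1)" by simp
  also have "pK (n^2 + 1) \<le> real (n^2) powr (-5/4)"
  proof -
    have "pK (n^2 + 1) = real (n^2 + 1) powr (-5/4) / norm_c" by (simp add: pK_eq)
    also have "\<dots> \<le> real (n^2 + 1) powr (-5/4)"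
      using c_ge1 mult_left_mono[of 1 norm_c "real (n^2+1) powr (-5/4)"] by (simp add: divide_le_eq)
    also have "\<dots> \<le> real (n^2) powr (-5/4)" using n by (intro powr_mono2') auto
    finally show ?thesis .
  qed
  then have "real n * pK (n^2 + 1) \<le> real n * real (n^2) powr (-5/4)" by (intro mult_left_mono) auto
  also have "real n * real (n^2) powr (-5/4) = real n powr (-3/2)"
  proof -
    have p: "real n > 0" using n by simp
    have "real (n^2) powr (-5/4) = (real n powr 2) powr (-5/4)" using p by (simp add: powr_realpow)
    also have "\<dots> = real n powr (-5/2)" using powr_powr[of "real n" 2 "-5/4"] by simp
    finally have "real n * real (n^2) powr (-5/4) = real n powr 1 * real n powr (-5/2)" using p by simp
    also have "\<dots> = real n powr (1 + (-5/2))" by (simp only: powr_add)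
    finally show ?thesis by simp
  qed
  finally show ?thesis by simp
qed

lemma AE_D: "AE \<omega> in M. eventually (\<lambda>n. \<omega> \<in> space M - Dev n) sequentially"
proof (rule borel_cantelli_AE1)
  show "\<And>n. Dev n \<in> events" by (rule Dev_sets)
  show "\<And>n. emeasure M (Dev n) < \<infinity>" by (simp add: less_top[symmetric])
  show "summable (\<lambda>n. prob (Dev n))"
  proof (rule summable_comparison_test')
    show "summable (\<lambda>n. real n powr (-3/2))"
      by (simp add: summable_real_powr_iff)
    show "norm (prob (Dev n)) \<le> real n powr (-3/2)" if "n \<ge> 1" for n
      using prob_Dev_le[OF that] by simp
  qed
qed

end



lemma mrt:
  fixes k :: "nat \<Rightarrow> nat"
  assumes i: "i \<ge> 1"
  shows "max_record_time k i \<in> {1..i} \<and> record_time k (max_record_time k i) \<and>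
         k (max_record_time k i) = Max (k ` {1..i})"
proof -
  define Mx where "Mx = Max (k ` {1..i})"
  have "Mx \<in> k ` {1..i}" unfolding Mx_def using i by (intro Max_in) auto
  then have ex: "\<exists>m. m \<in> {1..i} \<and> k m = Mx" by auto
  define ms where "ms = (LEAST m. m \<in> {1..i} \<and> k m = Mx)"
  have ms: "ms \<in> {1..i} \<and> k ms = Mx" unfolding ms_def by (rule LeastI_ex[OF ex])
  have le: "k l \<le> Mx" if "l \<in> {1..i}" for l unfolding Mx_def using that by (intro Max_ge) auto
  have rec: "record_time k ms"
    unfolding record_time_def
  proof (intro conjI ballI)
    show "1 \<le> ms" using ms by auto
    fix l assume l: "l \<in> {1..<ms}"
    then have "l \<in> {1..i}" using ms by auto
    moreover have "k l \<noteq> Mx"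
    proof
      assume "k l = Mx"
      then have "ms \<le> l" unfolding ms_def using \<open>l \<in> {1..i}\<close> by (intro Least_le) auto
      then show False using l by auto
    qed
    ultimately show "k l < k ms" using le ms by force
  qed
  have "max_record_time k i = ms"
    unfolding max_record_time_def
  proof (rule Greatest_equality)
    show "ms \<le> i \<and> record_time k ms" using ms rec by auto
    fix m' assume m': "m' \<le> i \<and> record_time k m'"
    show "m' \<le> ms"
    proof (rule ccontr)
      assume "\<not> m' \<le> ms"
      then have "k ms < k m'" using m' ms unfolding record_time_def by auto
      moreover have "k m' \<le> Mx" using m' le unfolding record_time_def by auto
      ultimately show False using ms by auto
    qed
  qed
  then show ?thesis using ms rec Mx_def by simp
qed

lemma det:
  fixes k :: "nat \<Rightarrow> nat" and y :: "nat \<Rightarrow> colour"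
  assumes a: "\<forall>i\<ge>N1. \<exists>l\<in>{1..i}. k l > i^2"
    and d: "\<forall>n\<ge>N2. \<not>(\<exists>l\<in>{1..n}. k l = k (Suc n) \<and> k (Suc n) > n^2)"
    and r: "\<forall>n\<ge>N3. \<not>(k (Suc n) \<ge> Suc n \<and> y (Suc n) = Red)"
  shows "\<exists>i0. \<forall>i>i0. (let m = max_record_time k i in
         Max (k ` {1..i}) = k m \<and> simple_record_time k m \<and> Max (k ` {1..i}) > i \<and> y m = Blue)"
proof -
  define N where "N = N1 + N2 + N3 + 1"
  define B where "B = Max (k ` {1..N})"
  have sq: "n \<le> n^2" for n :: nat by (simp add: power2_eq_square)
  have "\<forall>i>N + B. (let m = max_record_time k i in
         Max (k ` {1..i}) = k m \<and> simple_record_time k m \<and> Max (k ` {1..i}) > i \<and> y m = Blue)"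
  proof (intro allI impI)
    fix i assume i: "i > N + B"
    define m where "m = max_record_time k i"
    have i1: "i \<ge> 1" "i \<ge> N1" using i N_def by auto
    have mp: "m \<in> {1..i}" "record_time k m" "k m = Max (k ` {1..i})"
      using mrt[OF i1(1), of k] m_def by auto
    obtain l where l: "l \<in> {1..i}" "k l > i^2" using a i1 by auto
    have hM: "k l \<le> Max (k ` {1..i})" using l by (intro Max_ge) auto
    have big: "Max (k ` {1..i}) > i" using hM l(2) sq[of i] by linarith
    have mN: "m > N"
    proof (rule ccontr)
      assume "\<not> m > N"
      then have "m \<in> {1..N}" using mp by auto
      then have "k m \<le> B" unfolding B_def by (intro Max_ge) auto
      then show False using mp(3) big i by linarith
    qed
    have simple: "simple_record_time k m"
      unfolding simple_record_time_def
    proof (intro conjI allI impI)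
      show "record_time k m" by fact
      fix j assume j: "j > m" and ns: "nonstrict_record_time k j"
      show "k m < k j"
      proof (rule ccontr)
        assume c: "\<not> k m < k j"
        obtain n where jn: "j = Suc n" using j by (cases j) auto
        have mj: "m \<in> {1..<j}" using mp j by auto
        then have "k m \<le> k j" using ns unfolding nonstrict_record_time_def by auto
        then have eq: "k m = k j" using c by auto
        have nN: "n \<ge> N1" "n \<ge> N2" using mN j jn N_def by auto
        obtain l' where l': "l' \<in> {1..n}" "k l' > n^2" using a nN by auto
        then have "k l' \<le> k j" using ns jn unfolding nonstrict_record_time_def by auto
        then have "k (Suc n) > n^2" using l' jn by auto
        moreover have "m \<in> {1..n}" using mj jn by auto
        ultimately show False using d nN eq jn by auto
      qed
    qed
    have blue: "y m = Blue"
    proof -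
      obtain n where mn: "m = Suc n" using mN by (cases m) auto
      have nN: "n \<ge> N1" "n \<ge> N3" using mN mn N_def by auto
      obtain l' where l': "l' \<in> {1..n}" "k l' > n^2" using a nN by auto
      then have "k l' < k m" using mp mn unfolding record_time_def by auto
      then have "k m \<ge> Suc n" using l' sq[of n] by auto
      then have "y m \<noteq> Red" using r nN mn by auto
      then show ?thesis by (cases "y m") auto
    qed
    show "let m = max_record_time k i in
         Max (k ` {1..i}) = k m \<and> simple_record_time k m \<and> Max (k ` {1..i}) > i \<and> y m = Blue"
      unfolding Let_def m_def[symmetric] using mp big simple blue by auto
  qed
  then show ?thesis by blast
qed

context KYs begin

lemma main:
  "AE \<omega> in M. \<exists>i0. \<forall>i>i0.
      (let k = (\<lambda>j. K j \<omega>); m = max_record_time k i in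
         Max (k ` {1..i}) = k m \<and>
         simple_record_time k m \<and>
         Max (k ` {1..i}) > i \<and>
         Y m \<omega> = Blue)"
  using AE_A AE_D AE_R AE_space
proof eventually_elim
  case (elim \<omega>)
  from elim(1) obtain N1 where N1: "\<forall>n\<ge>N1. \<omega> \<in> space M - Aev n" by (auto simp: eventually_sequentially)
  from elim(2) obtain N2 where N2: "\<forall>n\<ge>N2. \<omega> \<in> space M - Dev n" by (auto simp: eventually_sequentially)
  from elim(3) obtain N3 where N3: "\<forall>n\<ge>N3. \<omega> \<in> space M - Rev n" by (auto simp: eventually_sequentially)
  have a: "\<forall>i\<ge>N1. \<exists>l\<in>{1..i}. K l \<omega> > i^2"
    using N1 elim(4) unfolding Aev_def by (auto simp: not_le)
  have d: "\<forall>n\<ge>N2. \<not>(\<exists>l\<in>{1..n}. K l \<omega> = K (Suc n) \<omega> \<and> K (Suc n) \<omega> > n^2)"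
    using N2 elim(4) unfolding Dev_def by auto
  have r: "\<forall>n\<ge>N3. \<not>(K (Suc n) \<omega> \<ge> Suc n \<and> Y (Suc n) \<omega> = Red)"
    using N3 elim(4) unfolding Rev_def by auto
  show ?case using det[of N1 "\<lambda>j. K j \<omega>" N2 N3 "\<lambda>j. Y j \<omega>", OF a d r] by (simp add: Let_def)
qed

end

theorem mainTheorem6:
  fixes M :: "'a measure"
    and K :: "nat \<Rightarrow> 'a \<Rightarrow> nat"
    and Y :: "nat \<Rightarrow> 'a \<Rightarrow> colour"
  assumes "prob_space M"
    and meas: "\<And>i. i \<ge> 1 \<Longrightarrow>
      (\<lambda>\<omega>. (K i \<omega>, Y i \<omega>)) \<in> measurable M (count_space UNIV)"
    and indep: "prob_space.indep_vars M (\<lambda>_. count_space UNIV)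
      (\<lambda>i \<omega>. (K i \<omega>, Y i \<omega>)) {1..}"
    and law: "\<And>i k y. i \<ge> 1 \<Longrightarrow>
      measure M {\<omega> \<in> space M. K i \<omega> = k \<and> Y i \<omega> = y} = KY_prob k y"
  shows "AE \<omega> in M. \<exists>i0. \<forall>i>i0.
      (let k = (\<lambda>j. K j \<omega>); m = max_record_time k i in
         Max (k ` {1..i}) = k m \<and>
         simple_record_time k m \<and>
         Max (k ` {1..i}) > i \<and>
         Y m \<omega> = Blue)"
proof -
  have "KYs M K Y"
    unfolding KYs_def KYs_axioms_def using assms by auto
  then show ?thesis by (rule KYs.main)
qed

end
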